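(* Let $P$ be the Petersen graph, i.e. the graph whose vertices are the $2$-element subsets of $\{1,2,3,4,5\}$, two vertices being adjacent if and only if the corresponding subsets are disjoint. Then the resolving topological index of $P$ is $\mathcal{R}(P)=\frac{5}{3}$.
   Context: All graphs are finite, simple and connected, with at least two vertices; $d(u,v)$ denotes the shortest-path distance. $V_p$ denotes the set of all unordered pairs $(u,v)$ of distinct vertices. A vertex $x$ resolves the pair $(u,v)$ if $d(x,u)\neq d(x,v)$. For $(u,v)\in V_p$, $R(u,v)$ is the set of all vertices resolving $(u,v)$ (it always contains $u$ and $v$). The resolving share of a vertex $w$ for $(u,v)$ is $r_w(u,v)=\frac{1}{|R(u,v)|}$ if $w$ resolves $u$ and $v$, and $r_w(u,v)=0$ otherwise. For a vertex $w$, $R(w)$ is the set of pairs in $V_p$ resolved by $w$ (nonempty, as it contains all pairs $(w,x)$). The average resolving share of $w$ is $ar_w(G)=\frac{1}{|R(w)|}\sum_{(u,v)\in R(w)} r_w(u,v)$, and the resolving topological index of $G$ is $\mathcal{R}(G)=\sum_{w\in V(G)} ar_w(G)$. *)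

theory Defs
  imports Complex_Main
begin

definition walk :: "'a set \<Rightarrow> ('a \<Rightarrow> 'a \<Rightarrow> bool) \<Rightarrow> 'a list \<Rightarrow> bool" where
  "walk V E xs \<longleftrightarrow> xs \<noteq> [] \<and> set xs \<subseteq> V \<and> (\<forall>i. Suc i < length xs \<longrightarrow> E (xs ! i) (xs ! Suc i))"

definition gdist :: "'a set \<Rightarrow> ('a \<Rightarrow> 'a \<Rightarrow> bool) \<Rightarrow> 'a \<Rightarrow> 'a \<Rightarrow> nat" where
  "gdist V E u v = (LEAST n. \<exists>xs. walk V E xs \<and> hd xs = u \<and> last xs = v \<and> length xs = Suc n)"

definition connected_graph :: "'a set \<Rightarrow> ('a \<Rightarrow> 'a \<Rightarrow> bool) \<Rightarrow> bool" where
  "connected_graph V E \<longleftrightarrow> (\<forall>u\<in>V. \<forall>v\<in>V. \<exists>xs. walk V E xs \<and> hd xs = u \<and> last xs = v)"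

definition vpairs :: "'a set \<Rightarrow> 'a set set" where
  "vpairs V = {{u, v} | u v. u \<in> V \<and> v \<in> V \<and> u \<noteq> v}"

definition resolves :: "'a set \<Rightarrow> ('a \<Rightarrow> 'a \<Rightarrow> bool) \<Rightarrow> 'a \<Rightarrow> 'a set \<Rightarrow> bool" where
  "resolves V E x p \<longleftrightarrow> (\<exists>u v. p = {u, v} \<and> u \<noteq> v \<and> gdist V E x u \<noteq> gdist V E x v)"

definition resolving_set_of_pair :: "'a set \<Rightarrow> ('a \<Rightarrow> 'a \<Rightarrow> bool) \<Rightarrow> 'a set \<Rightarrow> 'a set" where
  "resolving_set_of_pair V E p = {x \<in> V. resolves V E x p}"

definition resolving_share :: "'a set \<Rightarrow> ('a \<Rightarrow> 'a \<Rightarrow> bool) \<Rightarrow> 'a \<Rightarrow> 'a set \<Rightarrow> real" where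
  "resolving_share V E w p =
     (if resolves V E w p then 1 / real (card (resolving_set_of_pair V E p)) else 0)"

definition pairs_resolved_by :: "'a set \<Rightarrow> ('a \<Rightarrow> 'a \<Rightarrow> bool) \<Rightarrow> 'a \<Rightarrow> 'a set set" where
  "pairs_resolved_by V E w = {p \<in> vpairs V. resolves V E w p}"

definition avg_resolving_share :: "'a set \<Rightarrow> ('a \<Rightarrow> 'a \<Rightarrow> bool) \<Rightarrow> 'a \<Rightarrow> real" where
  "avg_resolving_share V E w =
     (1 / real (card (pairs_resolved_by V E w))) *
     (\<Sum>p\<in>pairs_resolved_by V E w. resolving_share V E w p)"

definition resolving_topological_index :: "'a set \<Rightarrow> ('a \<Rightarrow> 'a \<Rightarrow> bool) \<Rightarrow> real" where
  "resolving_topological_index V E = (\<Sum>w\<in>V. avg_resolving_share V E w)"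

definition petersen_V :: "nat set set" where
  "petersen_V = {S. S \<subseteq> {1..5} \<and> card S = 2}"

definition petersen_E :: "nat set \<Rightarrow> nat set \<Rightarrow> bool" where
  "petersen_E S T \<longleftrightarrow> S \<inter> T = {}"

end

theory Submission imports Defs begin
definition PV :: "nat set set" where
  "PV = {{1,2},{1,3},{1,4},{1,5},{2,3},{2,4},{2,5},{3,4},{3,5},{4,5}}"
definition dd :: "nat set \<Rightarrow> nat set \<Rightarrow> nat" where
  "dd S T = (if S = T then 0 else if S \<inter> T = {} then 1 else 2)"
lemma cardPV: "card PV = 10" unfolding PV_def by code_simp
lemma common_nb: "\<forall>u\<in>PV. \<forall>v\<in>PV. u \<noteq> v \<and> u \<inter> v \<noteq> {} \<longrightarrow> (\<exists>w\<in>PV. u \<inter> w = {} \<and> w \<inter> v = {})"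
  unfolding PV_def by code_simp
lemma card6_comp: "\<forall>u\<in>PV. \<forall>v\<in>PV. u \<noteq> v \<longrightarrow> card {x\<in>PV. dd x u \<noteq> dd x v} = 6"
  unfolding PV_def dd_def by code_simp
lemma PV_aux1: "\<forall>x\<in>{1..5::nat}. \<forall>y\<in>{1..5}. x \<noteq> y \<longrightarrow> {x,y} \<in> PV"
  unfolding PV_def by code_simp
lemma PV_aux2: "\<forall>S\<in>PV. S \<subseteq> {1..5} \<and> card S = 2"
  unfolding PV_def by code_simp
lemma PV_eq: "petersen_V = PV"
proof
  show "petersen_V \<subseteq> PV"
  proof
    fix S assume "S \<in> petersen_V"
    then have S: "S \<subseteq> {1..5}" "card S = 2" by (auto simp: petersen_V_def)
    then obtain x y where xy: "S = {x,y}" "x \<noteq> y" by (auto simp: card_2_iff)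
    then have "x \<in> {1..5}" "y \<in> {1..5}" using S by auto
    then show "S \<in> PV" using xy PV_aux1 by blast
  qed
next
  show "PV \<subseteq> petersen_V" unfolding petersen_V_def using PV_aux2 by auto
qed
lemma walk_single: "walk V E xs \<Longrightarrow> length xs = Suc 0 \<Longrightarrow> hd xs = last xs"
  by (cases xs) auto

lemma walk_two: "walk V E xs \<Longrightarrow> length xs = Suc (Suc 0) \<Longrightarrow> E (hd xs) (last xs)"
  unfolding walk_def
  apply (cases xs; simp)
  subgoal for a ys by (cases ys; force)
  done

lemma gdist0: "u \<in> V \<Longrightarrow> gdist V E u u = 0"
  unfolding gdist_def
  apply (rule Least_equality)
  apply (rule exI[of _ "[u]"]) apply (auto simp: walk_def)
  done

lemma gdist1: "u \<in> V \<Longrightarrow> v \<in> V \<Longrightarrow> u \<noteq> v \<Longrightarrow> E u v \<Longrightarrow> gdist V E u v = 1"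
  unfolding gdist_def
  apply (rule Least_equality)
   apply (rule exI[of _ "[u,v]"]) apply (simp add: walk_def less_Suc_eq)
  using walk_single by (metis One_nat_def leI less_one)

lemma gdist2: "u \<in> V \<Longrightarrow> v \<in> V \<Longrightarrow> w \<in> V \<Longrightarrow> u \<noteq> v \<Longrightarrow> \<not> E u v \<Longrightarrow> E u w \<Longrightarrow> E w v
   \<Longrightarrow> gdist V E u v = 2"
  unfolding gdist_def
proof (rule Least_equality)
  assume "u \<in> V" "v \<in> V" "w \<in> V" "E u w" "E w v"
  then show "\<exists>xs. walk V E xs \<and> hd xs = u \<and> last xs = v \<and> length xs = Suc 2"
    apply (intro exI[of _ "[u,w,v]"])
    apply (simp add: walk_def)
    by (metis One_nat_def less_2_cases nth_Cons_0 nth_Cons_Suc numeral_2_eq_2)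
next
  fix y assume a: "u \<noteq> v" "\<not> E u v" and
    "\<exists>xs. walk V E xs \<and> hd xs = u \<and> last xs = v \<and> length xs = Suc y"
  then obtain xs where xs: "walk V E xs" "hd xs = u" "last xs = v" "length xs = Suc y" by blast
  show "2 \<le> y"
  proof (rule ccontr)
    assume "\<not> 2 \<le> y"
    then have "y = 0 \<or> y = 1" by auto
    then show False using xs a walk_single walk_two by (metis One_nat_def)
  qed
qed



lemma gdist_dd: "u \<in> PV \<Longrightarrow> v \<in> PV \<Longrightarrow> gdist petersen_V petersen_E u v = dd u v"
proof -
  assume u: "u \<in> PV" and v: "v \<in> PV"
  show ?thesis
  proof (cases "u = v")
    case True then show ?thesis using gdist0 u PV_eq by (simp add: dd_def)
  next
    case ne: False
    show ?thesis
    proof (cases "u \<inter> v = {}")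
      case True then show ?thesis using gdist1[of u petersen_V v petersen_E] u v ne PV_eq
        by (simp add: dd_def petersen_E_def)
    next
      case False
      then obtain w where "w \<in> PV" "u \<inter> w = {}" "w \<inter> v = {}" using common_nb u v ne by blast
      then show ?thesis using gdist2[of u petersen_V v w petersen_E] u v ne False PV_eq
        by (simp add: dd_def petersen_E_def)
    qed
  qed
qed

lemma resolves_dd: "x \<in> PV \<Longrightarrow> u \<in> PV \<Longrightarrow> v \<in> PV \<Longrightarrow> u \<noteq> v \<Longrightarrow>
  resolves petersen_V petersen_E x {u,v} \<longleftrightarrow> dd x u \<noteq> dd x v"
proof -
  assume a: "x \<in> PV" "u \<in> PV" "v \<in> PV" "u \<noteq> v"
  have "resolves petersen_V petersen_E x {u,v} \<longleftrightarrow>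
     gdist petersen_V petersen_E x u \<noteq> gdist petersen_V petersen_E x v"
    unfolding resolves_def using a(4) by (auto simp: doubleton_eq_iff)
  then show ?thesis using a by (simp add: gdist_dd)
qed


lemma card_R: assumes "p \<in> vpairs petersen_V"
  shows "card (resolving_set_of_pair petersen_V petersen_E p) = 6"
proof -
  obtain u v where p: "p = {u,v}" "u \<in> PV" "v \<in> PV" "u \<noteq> v"
    using assms unfolding vpairs_def PV_eq by blast
  have eq: "\<And>x. x \<in> petersen_V \<Longrightarrow> resolves petersen_V petersen_E x {u,v} \<longleftrightarrow> dd x u \<noteq> dd x v"
    using resolves_dd p(2-4) PV_eq by simp
  have "resolving_set_of_pair petersen_V petersen_E p = {x\<in>petersen_V. dd x u \<noteq> dd x v}"
    unfolding resolving_set_of_pair_def p(1)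
    by (intro Collect_cong) (metis eq)
  moreover have "card {x\<in>PV. dd x u \<noteq> dd x v} = 6" using card6_comp p(2-4) by blast
  ultimately show ?thesis using PV_eq by simp
qed

lemma finPV: "finite PV" unfolding PV_def by simp

lemma other: "\<forall>w\<in>PV. \<exists>v\<in>PV. v \<noteq> w \<and> dd w w \<noteq> dd w v" unfolding PV_def dd_def by code_simp

lemma avg: assumes w: "w \<in> petersen_V" shows "avg_resolving_share petersen_V petersen_E w = 1/6"
proof -
  let ?R = "pairs_resolved_by petersen_V petersen_E w"
  have fin: "finite ?R"
  proof (rule finite_subset)
    show "?R \<subseteq> Pow PV" unfolding pairs_resolved_by_def vpairs_def PV_eq by blast
  qed (simp add: finPV)
  obtain v where v: "v \<in> PV" "v \<noteq> w" "dd w w \<noteq> dd w v" using other w PV_eq by blast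
  have "{w,v} \<in> vpairs petersen_V" unfolding vpairs_def using v w PV_eq by blast
  moreover have "resolves petersen_V petersen_E w {w,v}" using resolves_dd[of w w v] v w PV_eq by simp
  ultimately have "{w,v} \<in> ?R" unfolding pairs_resolved_by_def by blast
  then have ne: "card ?R \<noteq> 0" using fin by auto
  have "(\<Sum>p\<in>?R. resolving_share petersen_V petersen_E w p) = (\<Sum>p\<in>?R. 1/6)"
    by (rule sum.cong) (auto simp: resolving_share_def pairs_resolved_by_def card_R)
  then show ?thesis unfolding avg_resolving_share_def using ne by simp
qed

theorem theorem3p6:
  shows "resolving_topological_index petersen_V petersen_E = 5 / 3"
proof -
  have "resolving_topological_index petersen_V petersen_E = (\<Sum>w\<in>petersen_V. 1/6)"
    unfolding resolving_topological_index_def by (rule sum.cong) (auto simp: avg)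
  also have "\<dots> = 10 / 6" using cardPV PV_eq by simp
  finally show ?thesis by simp
qed

end
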